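(* Let $f=\prod_{i=1}^n(y-a_i)\in\overline{K}[y]$ be reduced ($a_i$ pairwise distinct, $n\ge2$) with $\nu(a_i)>0$ for all $i$. Let $r\in\mathbf Q$ and $w\in\overline{\mathcal F}_r$. Then the solution $(u,v)\in\overline{\mathcal F}\times\overline{\mathcal E}$ of $u f'_x+vf'_y=wf$ is given by $$u=(\mathcal A_{|\overline{\mathcal F}})^{-1}w\in\overline{\mathcal F}_{r+1},\qquad v=\sum_{i=1}^n u_ia'_i\varepsilon_i\in\overline{\mathcal E}_{>r},$$ where $u=\sum_i u_i\varepsilon_i$. In particular $\overline{\mathcal F}_r f\subset\overline{\mathcal F}_{r+1}f'_x+\overline{\mathcal E}_{>r}f'_y$. More precisely, if $\mathrm{in}_r w=W$, then $\mathrm{in}_{r+1}u=(A_{|F})^{-1}W$.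
   Context: $\overline K=\bigcup_{d\ge1}\mathbf C[[x^{1/d}]][1/x]$ with valuation $\nu$; $'$ and $\partial_x$ denote $d/dx$ on $\overline K$ (with $(x^q)'=qx^{q-1}$), applied coefficientwise to polynomials in $y$. $\overline{\mathcal E}$ is the $\overline K$-space of polynomials in $y$ of degree $<n$, $\overline{\mathcal F}$ those of degree $<n-1$. $\varepsilon_i=\prod_{j\ne i}(y-a_j)$ form a basis of $\overline{\mathcal E}$, and $\overline{\mathcal F}=\{\sum u_i\varepsilon_i:\sum u_i=0\}$. For $w=\sum w_i\varepsilon_i$, $\mathrm{val}(w)=\inf_i\nu(w_i)$; $\overline{\mathcal E}_r=\{w:\mathrm{val}(w)\ge r\}$, $\overline{\mathcal E}_{>r}=\{w:\mathrm{val}(w)>r\}$, $\overline{\mathcal F}_r=\overline{\mathcal E}_r\cap\overline{\mathcal F}$. For $w\in\overline{\mathcal E}_r$, $\mathrm{in}_r w\in\mathbf C^n$ is the vector of coefficients of $x^r$ in $w_1,\dots,w_n$. With $m_{i,j}=\nu(a_i-a_j)$ and $m_i=\sum_{j\ne i}m_{i,j}$, $A$ is the matrix with off-diagonal entries $-m_{i,j}$ and diagonal entries $m_i$; $F=\{W\in\mathbf C^n:\sum W_i=0\}$ and $A_{|F}$ is the (invertible) restriction of $A$ to $F$. The complete magic matrix $\mathcal A$ is the symmetric $n\times n$ matrix over $\overline K$ with off-diagonal entries $-(a'_i-a'_j)/(a_i-a_j)$ and diagonal entries $\sum_{j\neq i}(a'_i-a'_j)/(a_i-a_j)$, acting on $\overline{\mathcal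 E}$ through coordinates in the basis $(\varepsilon_i)$; it maps $\overline{\mathcal F}$ into itself and $\mathcal A_{|\overline{\mathcal F}}$ is invertible. *)

theory Defs
  imports "HOL-Computational_Algebra.Computational_Algebra"
begin

text \<open>Level-d model of the field of Puiseux series: an element g of complex fls
  (formal Laurent series in t) stands for the Puiseux series g(x^(1/d)), i.e. t = x^(1/d).\<close>

type_synonym lser = "complex fls"

text \<open>d/dx at level d:  (x^(k/d))' = (k/d) x^(k/d - 1), i.e. t^k goes to (k/d) t^(k-d).\<close>
definition dx :: "nat \<Rightarrow> lser \<Rightarrow> lser" where
  "dx d g = fls_const (1 / of_nat d) * fls_shift (int d - 1) (fls_deriv g)"

text \<open>valuation nu (in Q) at level d; only used on nonzero elements.\<close>
definition nu :: "nat \<Rightarrow> lser \<Rightarrow> rat" where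
  "nu d g = of_int (fls_subdegree g) / of_nat d"

definition nu_ge :: "nat \<Rightarrow> lser \<Rightarrow> rat \<Rightarrow> bool" where
  "nu_ge d g r \<longleftrightarrow> g = 0 \<or> nu d g \<ge> r"

definition nu_gt :: "nat \<Rightarrow> lser \<Rightarrow> rat \<Rightarrow> bool" where
  "nu_gt d g r \<longleftrightarrow> g = 0 \<or> nu d g > r"

definition coeff_x :: "nat \<Rightarrow> lser \<Rightarrow> rat \<Rightarrow> complex" where
  "coeff_x d g r = (if r * of_nat d \<in> \<int> then fls_nth g \<lfloor>r * of_nat d\<rfloor> else 0)"

text \<open>Vectors (coordinates w.r.t. the basis eps_i) are functions on indices 0..<n.\<close>

definition E_ge :: "nat \<Rightarrow> nat \<Rightarrow> (nat \<Rightarrow> lser) \<Rightarrow> rat \<Rightarrow> bool" where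
  "E_ge n d w r \<longleftrightarrow> (\<forall>i<n. nu_ge d (w i) r)"

definition E_gt :: "nat \<Rightarrow> nat \<Rightarrow> (nat \<Rightarrow> lser) \<Rightarrow> rat \<Rightarrow> bool" where
  "E_gt n d w r \<longleftrightarrow> (\<forall>i<n. nu_gt d (w i) r)"

definition inF :: "nat \<Rightarrow> (nat \<Rightarrow> 'a::comm_monoid_add) \<Rightarrow> bool" where
  "inF n w \<longleftrightarrow> (\<Sum>i<n. w i) = 0"

definition in_r :: "nat \<Rightarrow> (nat \<Rightarrow> lser) \<Rightarrow> rat \<Rightarrow> nat \<Rightarrow> complex" where
  "in_r d w r = (\<lambda>i. coeff_x d (w i) r)"

definition fpoly :: "nat \<Rightarrow> (nat \<Rightarrow> lser) \<Rightarrow> lser poly" where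
  "fpoly n a = (\<Prod>i<n. [:- a i, 1:])"

definition eps :: "nat \<Rightarrow> (nat \<Rightarrow> lser) \<Rightarrow> nat \<Rightarrow> lser poly" where
  "eps n a i = (\<Prod>j\<in>{..<n} - {i}. [:- a j, 1:])"

definition vec_poly :: "nat \<Rightarrow> (nat \<Rightarrow> lser) \<Rightarrow> (nat \<Rightarrow> lser) \<Rightarrow> lser poly" where
  "vec_poly n a w = (\<Sum>i<n. smult (w i) (eps n a i))"

definition pdx :: "nat \<Rightarrow> lser poly \<Rightarrow> lser poly" where
  "pdx d p = map_poly (dx d) p"

definition magic :: "nat \<Rightarrow> nat \<Rightarrow> (nat \<Rightarrow> lser) \<Rightarrow> nat \<Rightarrow> nat \<Rightarrow> lser" where
  "magic n d a i j = (if i = j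
     then (\<Sum>k\<in>{..<n} - {i}. (dx d (a i) - dx d (a k)) / (a i - a k))
     else - (dx d (a i) - dx d (a j)) / (a i - a j))"

definition magic_app :: "nat \<Rightarrow> nat \<Rightarrow> (nat \<Rightarrow> lser) \<Rightarrow> (nat \<Rightarrow> lser) \<Rightarrow> nat \<Rightarrow> lser" where
  "magic_app n d a u = (\<lambda>i. \<Sum>j<n. magic n d a i j * u j)"

definition Amat :: "nat \<Rightarrow> nat \<Rightarrow> (nat \<Rightarrow> lser) \<Rightarrow> nat \<Rightarrow> nat \<Rightarrow> rat" where
  "Amat n d a i j = (if i = j then (\<Sum>k\<in>{..<n} - {i}. nu d (a i - a k))
                     else - nu d (a i - a j))"

definition Amat_app :: "nat \<Rightarrow> nat \<Rightarrow> (nat \<Rightarrow> lser) \<Rightarrow> (nat \<Rightarrow> complex) \<Rightarrow> nat \<Rightarrow> complex" where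
  "Amat_app n d a W = (\<lambda>i. \<Sum>j<n. of_rat (Amat n d a i j) * W j)"

end

theory Submission
  imports Defs "Jordan_Normal_Form.Determinant"
begin
unbundle fps_syntax



lemma solve_lin:
  fixes M :: "nat \<Rightarrow> nat \<Rightarrow> 'a::field" and b :: "nat \<Rightarrow> 'a"
  assumes inj: "\<And>x. (\<forall>i<n. (\<Sum>j<n. M i j * x j) = 0) \<Longrightarrow> (\<forall>i<n. x i = 0)"
  shows "\<exists>x. \<forall>i<n. (\<Sum>j<n. M i j * x j) = b i"
proof -
  define A where "A = mat n n (\<lambda>(i,j). M i j)"
  have A: "A \<in> carrier_mat n n" unfolding A_def by simp
  have mv: "(A *\<^sub>v v) $ i = (\<Sum>j<n. M i j * v $ j)" if "i < n" "v \<in> carrier_vec n" for v i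
    using that unfolding A_def by (auto simp: mult_mat_vec_def scalar_prod_def atLeast0LessThan intro!: sum.cong)
  have "det A \<noteq> 0"
  proof
    assume "det A = 0"
    then obtain v where v: "v \<in> carrier_vec n" "v \<noteq> 0\<^sub>v n" "A *\<^sub>v v = 0\<^sub>v n"
      using det_0_iff_vec_prod_zero_field[OF A] by blast
    have "\<forall>i<n. (\<Sum>j<n. M i j * v $ j) = 0"
      using v mv by (metis index_zero_vec(1))
    then have "\<forall>i<n. v $ i = 0" using inj by blast
    then have "v = 0\<^sub>v n" using v(1) by (intro eq_vecI) auto
    with v(2) show False by simp
  qed
  define y where "y = (1 / det A) \<cdot>\<^sub>v (adj_mat A *\<^sub>v vec n b)"
  have yc: "y \<in> carrier_vec n" using adj_mat(1)[OF A] unfolding y_def by simp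
  have "A *\<^sub>v y = (1 / det A) \<cdot>\<^sub>v (A *\<^sub>v (adj_mat A *\<^sub>v vec n b))"
    unfolding y_def using adj_mat(1)[OF A] A by (simp add: mult_mat_vec)
  also have "\<dots> = (1 / det A) \<cdot>\<^sub>v ((A * adj_mat A) *\<^sub>v vec n b)"
    using adj_mat(1)[OF A] A by (simp add: assoc_mult_mat_vec)
  also have "\<dots> = (1 / det A) \<cdot>\<^sub>v (det A \<cdot>\<^sub>v vec n b)"
    using adj_mat(2)[OF A] by auto
  also have "\<dots> = vec n b"
    using \<open>det A \<noteq> 0\<close> by (intro eq_vecI) auto
  finally have "A *\<^sub>v y = vec n b" .
  then show ?thesis using mv[OF _ yc] by (metis index_vec)
qed



definition lowvan :: "int \<Rightarrow> complex fls \<Rightarrow> bool" where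
  "lowvan p f \<longleftrightarrow> (\<forall>k<p. f $$ k = 0)"

lemma lowvan_mono: "lowvan p f \<Longrightarrow> q \<le> p \<Longrightarrow> lowvan q f"
  unfolding lowvan_def by auto

lemma lowvan_zero[simp]: "lowvan p 0"
  unfolding lowvan_def by auto

lemma lowvan_subdeg: "f \<noteq> 0 \<Longrightarrow> lowvan p f \<longleftrightarrow> p \<le> fls_subdegree f"
  unfolding lowvan_def
  by (meson fls_eq0_below_subdegree fls_subdegree_geI le_less_trans not_le)

lemma lowvan_mult:
  assumes "lowvan p f" "lowvan q g"
  shows "lowvan (p+q) (f*g)" "(f*g) $$ (p+q) = f $$ p * g $$ q"
proof -
  have "lowvan (p+q) (f*g) \<and> (f*g) $$ (p+q) = f $$ p * g $$ q"
  proof (cases "f = 0 \<or> g = 0")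
    case True then show ?thesis by auto
  next
    case False
    then have f: "f \<noteq> 0" and g: "g \<noteq> 0" by auto
    have sf: "p \<le> fls_subdegree f" using assms(1) f lowvan_subdeg by blast
    have sg: "q \<le> fls_subdegree g" using assms(2) g lowvan_subdeg by blast
    have l: "lowvan (p+q) (f*g)" unfolding lowvan_def
      using sf sg by (auto intro!: fls_times_nth_eq0)
    show ?thesis
    proof (cases "fls_subdegree f = p \<and> fls_subdegree g = q")
      case True
      then show ?thesis using l fls_times_base[of f g] by simp
    next
      case False
      then have "p + q < fls_subdegree f + fls_subdegree g" using sf sg by auto
      then have "(f*g) $$ (p+q) = 0" by (rule fls_times_nth_eq0)
      moreover have "f $$ p = 0 \<or> g $$ q = 0" using False sf sg by auto
      ultimately show ?thesis using l by auto
    qed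
  qed
  then show "lowvan (p+q) (f*g)" "(f*g) $$ (p+q) = f $$ p * g $$ q" by auto
qed

lemma lowvan_sum: "(\<And>x. x \<in> S \<Longrightarrow> lowvan p (f x)) \<Longrightarrow> lowvan p (\<Sum>x\<in>S. f x)"
  unfolding lowvan_def by (simp add: fls_nth_sum)

lemma lowvan_add: "lowvan p f \<Longrightarrow> lowvan p g \<Longrightarrow> lowvan p (f + g)"
  unfolding lowvan_def by simp

lemma lowvan_uminus: "lowvan p f \<Longrightarrow> lowvan p (- f)"
  unfolding lowvan_def by simp

lemma nu_ge_iff:
  assumes "d \<ge> 1"
  shows "nu_ge d g r \<longleftrightarrow> lowvan \<lceil>r * of_nat d\<rceil> g"
proof (cases "g = 0")
  case False
  have "nu d g \<ge> r \<longleftrightarrow> r * of_nat d \<le> of_int (fls_subdegree g)"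
    using assms unfolding nu_def by (simp add: pos_le_divide_eq)
  also have "\<dots> \<longleftrightarrow> \<lceil>r * of_nat d\<rceil> \<le> fls_subdegree g" by (simp add: ceiling_le_iff)
  finally show ?thesis using False lowvan_subdeg unfolding nu_ge_def by auto
qed (auto simp: nu_ge_def)

lemma nu_gt_iff:
  assumes "d \<ge> 1"
  shows "nu_gt d g r \<longleftrightarrow> lowvan (\<lfloor>r * of_nat d\<rfloor> + 1) g"
proof (cases "g = 0")
  case False
  have "nu d g > r \<longleftrightarrow> r * of_nat d < of_int (fls_subdegree g)"
    using assms unfolding nu_def by (simp add: pos_less_divide_eq)
  also have "\<dots> \<longleftrightarrow> \<lfloor>r * of_nat d\<rfloor> + 1 \<le> fls_subdegree g"
    using floor_less_iff[of "r * of_nat d" "fls_subdegree g"] by linarith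
  finally show ?thesis using False lowvan_subdeg unfolding nu_gt_def by auto
qed (auto simp: nu_gt_def)

lemma dx_nth: "dx d g $$ k = of_int (k + int d) / of_nat d * g $$ (k + int d)"
  by (cases "d = 0") (simp_all add: dx_def field_simps)

lemma dx_add: "dx d (f + g) = dx d f + dx d g"
  by (simp add: fls_eq_iff dx_nth ring_distribs)
lemma dx_diff: "dx d (f - g) = dx d f - dx d g"
  by (simp add: fls_eq_iff dx_nth ring_distribs)
lemma dx_uminus: "dx d (- f) = - dx d f"
  by (simp add: fls_eq_iff dx_nth ring_distribs)
lemma dx_zero[simp]: "dx d 0 = 0"
  by (simp add: fls_eq_iff dx_nth)
lemma dx_mult: "dx d (f * g) = dx d f * g + f * dx d g"
  unfolding dx_def
  by (simp add: fls_shifted_times_simps algebra_simps)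

lemma dx_quot:
  assumes d: "d \<ge> 1" and b: "b \<noteq> 0" and e: "fls_subdegree b \<noteq> 0"
  shows "lowvan (- int d) (dx d b / b)"
        "(dx d b / b) $$ (- int d) = of_int (fls_subdegree b) / of_nat d"
proof -
  define e where "e = fls_subdegree b"
  define q where "q = dx d b / b"
  have qb: "q * b = dx d b" unfolding q_def using b by simp
  have lb: "lowvan e b" using b lowvan_subdeg e_def by auto
  have ldx: "lowvan (e - int d) (dx d b)" using lb unfolding lowvan_def dx_nth by auto
  have cdx: "dx d b $$ (e - int d) = of_int e / of_nat d * b $$ e"
    unfolding dx_nth by simp
  have "b $$ e \<noteq> 0" using b e_def by simp
  then have "dx d b $$ (e - int d) \<noteq> 0" using cdx e d unfolding e_def by simp
  then have dxnz: "dx d b \<noteq> 0" by auto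
  then have qnz: "q \<noteq> 0" using qb by auto
  have "fls_subdegree (dx d b) = e - int d"
    using ldx \<open>dx d b $$ (e - int d) \<noteq> 0\<close> unfolding lowvan_def
    by (intro fls_subdegree_eqI) auto
  then have "fls_subdegree q = - int d" using qb qnz b e_def
    by (metis add_diff_cancel_right' diff_conv_add_uminus fls_subdegree_mult add.commute)
  then have lq: "lowvan (- int d) q" using lowvan_subdeg qnz by simp
  have "(q * b) $$ (- int d + e) = q $$ (- int d) * b $$ e" using lowvan_mult(2)[OF lq lb] .
  then have "q $$ (- int d) * b $$ e = of_int e / of_nat d * b $$ e" using qb cdx by (simp add: algebra_simps)
  then have "q $$ (- int d) = of_int e / of_nat d" using \<open>b $$ e \<noteq> 0\<close>
    by (metis mult_right_cancel times_divide_eq_left)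
  then show "lowvan (- int d) (dx d b / b)" "(dx d b / b) $$ (- int d) = of_int (fls_subdegree b) / of_nat d"
    using lq unfolding q_def e_def by auto
qed




lemma of_rat_complex: "(of_rat q :: complex) = of_real (of_rat q)"
  by (cases q) (simp add: of_rat_rat)

lemma real_kernel:
  fixes A :: "nat \<Rightarrow> nat \<Rightarrow> real" and x :: "nat \<Rightarrow> real"
  assumes neg: "\<And>i j. i < n \<Longrightarrow> j < n \<Longrightarrow> i \<noteq> j \<Longrightarrow> A i j < 0"
    and diag: "\<And>i. i < n \<Longrightarrow> A i i = - (\<Sum>j\<in>{..<n}-{i}. A i j)"
    and ker: "\<And>i. i < n \<Longrightarrow> (\<Sum>j<n. A i j * x j) = 0"
    and sumz: "(\<Sum>j<n. x j) = 0"
  shows "\<forall>i<n. x i = 0"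
proof (cases "n = 0")
  case False
  have form: "(\<Sum>j<n. A i j * x j) = (\<Sum>j\<in>{..<n}-{i}. (- A i j) * (x i - x j))" if "i < n" for i
  proof -
    have "(\<Sum>j<n. A i j * x j) = A i i * x i + (\<Sum>j\<in>{..<n}-{i}. A i j * x j)"
      using that by (simp add: sum.remove)
    also have "\<dots> = (\<Sum>j\<in>{..<n}-{i}. (- A i j) * (x i - x j))"
      using diag[OF that] by (simp add: sum_distrib_left sum_distrib_right sum_subtractf algebra_simps)
    finally show ?thesis .
  qed
  obtain i0 where i0: "i0 < n" "\<And>j. j < n \<Longrightarrow> x j \<le> x i0"
  proof -
    have "finite (x ` {..<n})" "x ` {..<n} \<noteq> {}" using False by auto
    then have "Max (x ` {..<n}) \<in> x ` {..<n}" by (rule Max_in)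
    then obtain i where "i < n" "x i = Max (x ` {..<n})" by auto
    then show ?thesis using that by (metis Max_ge finite_imageI finite_lessThan image_eqI lessThan_iff)
  qed
  have nn: "\<forall>j\<in>{..<n}-{i0}. 0 \<le> (- A i0 j) * (x i0 - x j)"
  proof
    fix j assume "j \<in> {..<n}-{i0}"
    then have "- A i0 j \<ge> 0" "x i0 - x j \<ge> 0" using neg[of i0 j] i0 by auto
    then show "0 \<le> (- A i0 j) * (x i0 - x j)" by (rule mult_nonneg_nonneg)
  qed
  have "(\<Sum>j\<in>{..<n}-{i0}. (- A i0 j) * (x i0 - x j)) = 0" using form[OF i0(1)] ker[OF i0(1)] by simp
  then have "\<forall>j\<in>{..<n}-{i0}. (- A i0 j) * (x i0 - x j) = 0"
    using nn sum_nonneg_eq_0_iff[of "{..<n}-{i0}" "\<lambda>j. (- A i0 j) * (x i0 - x j)"] by blast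
  then have eq: "\<forall>j<n. x j = x i0"
  proof (intro allI impI)
    fix j assume h: "\<forall>j\<in>{..<n}-{i0}. (- A i0 j) * (x i0 - x j) = 0" and j: "j < n"
    show "x j = x i0"
    proof (cases "j = i0")
      case False
      then have "A i0 j \<noteq> 0" using neg[OF i0(1) j] by auto
      moreover have "(- A i0 j) * (x i0 - x j) = 0" using h j False by auto
      ultimately show ?thesis by simp
    qed simp
  qed
  then have "(\<Sum>j<n. x j) = of_nat n * x i0" by simp
  then have "x i0 = 0" using sumz False by simp
  then show ?thesis using eq by auto
qed simp

lemma complex_kernel:
  fixes A :: "nat \<Rightarrow> nat \<Rightarrow> rat" and U :: "nat \<Rightarrow> complex"
  assumes neg: "\<And>i j. i < n \<Longrightarrow> j < n \<Longrightarrow> i \<noteq> j \<Longrightarrow> A i j < 0"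
    and diag: "\<And>i. i < n \<Longrightarrow> A i i = - (\<Sum>j\<in>{..<n}-{i}. A i j)"
    and ker: "\<And>i. i < n \<Longrightarrow> (\<Sum>j<n. of_rat (A i j) * U j) = 0"
    and sumz: "(\<Sum>j<n. U j) = 0"
  shows "\<forall>i<n. U i = 0"
proof -
  let ?A = "\<lambda>i j. real_of_rat (A i j)"
  have neg': "\<And>i j. i < n \<Longrightarrow> j < n \<Longrightarrow> i \<noteq> j \<Longrightarrow> ?A i j < 0" using neg by simp
  have diag': "\<And>i. i < n \<Longrightarrow> ?A i i = - (\<Sum>j\<in>{..<n}-{i}. ?A i j)" using diag by (simp add: of_rat_sum of_rat_minus)
  have k: "(\<Sum>j<n. of_rat (A i j) * U j) = (\<Sum>j<n. of_real (?A i j) * U j)" for i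
    by (simp add: of_rat_complex)
  have kr: "(\<Sum>j<n. ?A i j * Re (U j)) = 0" if "i < n" for i
  proof -
    have "Re (\<Sum>j<n. of_real (?A i j) * U j) = 0" using ker[OF that] k by simp
    then show ?thesis by (simp add: Re_sum)
  qed
  have ki: "(\<Sum>j<n. ?A i j * Im (U j)) = 0" if "i < n" for i
  proof -
    have "Im (\<Sum>j<n. of_real (?A i j) * U j) = 0" using ker[OF that] k by simp
    then show ?thesis by (simp add: Im_sum)
  qed
  have sr: "(\<Sum>j<n. Re (U j)) = 0" using arg_cong[OF sumz, of Re] by (simp add: Re_sum)
  have si: "(\<Sum>j<n. Im (U j)) = 0" using arg_cong[OF sumz, of Im] by (simp add: Im_sum)
  have "\<forall>i<n. Re (U i) = 0" by (rule real_kernel[OF neg' diag' kr sr])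
  moreover have "\<forall>i<n. Im (U i) = 0" by (rule real_kernel[OF neg' diag' ki si])
  ultimately show ?thesis by (simp add: complex_eq_iff)
qed




locale S =
  fixes n d :: nat and a :: "nat \<Rightarrow> complex fls"
  assumes d1: "d \<ge> 1"
    and dist: "\<forall>i<n. \<forall>j<n. i \<noteq> j \<longrightarrow> a i \<noteq> a j"
    and pos: "\<forall>i<n. nu_gt d (a i) 0"
begin

definition q :: "nat \<Rightarrow> nat \<Rightarrow> complex fls" where
  "q i j = (dx d (a i) - dx d (a j)) / (a i - a j)"

lemma magic_q: "magic n d a i j = (if i = j then (\<Sum>k\<in>{..<n}-{i}. q i k) else - q i j)"
  unfolding magic_def q_def by (simp add: diff_divide_distrib)

lemma q_sym: "q i j = q j i"
  unfolding q_def by (metis minus_diff_eq minus_divide_divide)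

lemma a_low: "i < n \<Longrightarrow> lowvan 1 (a i)"
  using pos nu_gt_iff[OF d1, of "a i" 0] by simp

lemma diff_props:
  assumes "i < n" "j < n" "i \<noteq> j"
  shows "a i - a j \<noteq> 0" "1 \<le> fls_subdegree (a i - a j)"
proof -
  show nz: "a i - a j \<noteq> 0" using dist assms by auto
  have "lowvan 1 (a i - a j)" using a_low assms unfolding lowvan_def by simp
  then show "1 \<le> fls_subdegree (a i - a j)" using lowvan_subdeg nz by blast
qed

lemma nu_pos: "i < n \<Longrightarrow> j < n \<Longrightarrow> i \<noteq> j \<Longrightarrow> nu d (a i - a j) > 0"
  using diff_props[of i j] d1 unfolding nu_def by (simp add: divide_pos_pos)

lemma q_low:
  assumes "i < n" "j < n" "i \<noteq> j"
  shows "lowvan (- int d) (q i j)" "q i j $$ (- int d) = of_rat (nu d (a i - a j))"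
proof -
  have qq: "q i j = dx d (a i - a j) / (a i - a j)" unfolding q_def by (simp add: dx_diff)
  have e: "fls_subdegree (a i - a j) \<noteq> 0" using diff_props[OF assms] by simp
  show "lowvan (- int d) (q i j)" using dx_quot(1)[OF d1 diff_props(1)[OF assms] e] qq by simp
  show "q i j $$ (- int d) = of_rat (nu d (a i - a j))"
    using dx_quot(2)[OF d1 diff_props(1)[OF assms] e] qq unfolding nu_def
    by (simp add: of_rat_divide)
qed

lemma Amat_neg: "i < n \<Longrightarrow> j < n \<Longrightarrow> i \<noteq> j \<Longrightarrow> Amat n d a i j < 0"
  using nu_pos unfolding Amat_def by simp

lemma Amat_diag: "i < n \<Longrightarrow> Amat n d a i i = - (\<Sum>j\<in>{..<n}-{i}. Amat n d a i j)"
  unfolding Amat_def by (simp add: sum_negf)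

lemma mag:
  assumes "i < n" "j < n"
  shows "lowvan (- int d) (magic n d a i j)" "magic n d a i j $$ (- int d) = of_rat (Amat n d a i j)"
proof -
  have "lowvan (- int d) (magic n d a i j) \<and> magic n d a i j $$ (- int d) = of_rat (Amat n d a i j)"
  proof (cases "i = j")
    case True
    have "lowvan (- int d) (\<Sum>k\<in>{..<n}-{i}. q i k)"
      using q_low assms by (intro lowvan_sum) auto
    moreover have "(\<Sum>k\<in>{..<n}-{i}. q i k) $$ (- int d) = (\<Sum>k\<in>{..<n}-{i}. of_rat (nu d (a i - a k)))"
      using q_low assms by (simp add: fls_nth_sum)
    ultimately show ?thesis using True unfolding magic_q Amat_def by (simp add: of_rat_sum)
  next
    case False
    then show ?thesis using q_low[OF assms False] lowvan_uminus unfolding magic_q Amat_def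
      by (simp add: of_rat_minus)
  qed
  then show "lowvan (- int d) (magic n d a i j)" "magic n d a i j $$ (- int d) = of_rat (Amat n d a i j)"
    by auto
qed

lemma mag_app:
  assumes z: "\<And>j. j < n \<Longrightarrow> lowvan p (z j)" and i: "i < n"
  shows "lowvan (p - int d) (magic_app n d a z i)"
        "magic_app n d a z i $$ (p - int d) = (\<Sum>j<n. of_rat (Amat n d a i j) * (z j $$ p))"
proof -
  have e: "p - int d = - int d + p" by simp
  have l: "lowvan (- int d + p) (magic n d a i j * z j)" if "j < n" for j
    using lowvan_mult(1)[OF mag(1)[OF i that] z[OF that]] .
  have c: "(magic n d a i j * z j) $$ (- int d + p) = of_rat (Amat n d a i j) * (z j $$ p)" if "j < n" for j
    using lowvan_mult(2)[OF mag(1)[OF i that] z[OF that]] mag(2)[OF i that] by simp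
  show "lowvan (p - int d) (magic_app n d a z i)"
    unfolding magic_app_def e using l by (intro lowvan_sum) auto
  show "magic_app n d a z i $$ (p - int d) = (\<Sum>j<n. of_rat (Amat n d a i j) * (z j $$ p))"
    unfolding magic_app_def e fls_nth_sum using c by simp
qed

lemma lead:
  assumes F: "inF n z" and nz: "\<exists>i<n. z i \<noteq> 0"
  shows "\<exists>p. (\<forall>j<n. lowvan p (z j)) \<and> (\<exists>i<n. magic_app n d a z i $$ (p - int d) \<noteq> 0)"
proof -
  define T where "T = {i. i < n \<and> z i \<noteq> 0}"
  define p where "p = Min ((\<lambda>i. fls_subdegree (z i)) ` T)"
  have fT: "finite T" "T \<noteq> {}" using nz unfolding T_def by auto
  have low: "\<forall>j<n. lowvan p (z j)"
  proof (intro allI impI)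
    fix j assume "j < n"
    show "lowvan p (z j)"
    proof (cases "z j = 0")
      case False
      then have "j \<in> T" using \<open>j < n\<close> unfolding T_def by auto
      then have "p \<le> fls_subdegree (z j)" unfolding p_def using fT by auto
      then show ?thesis using lowvan_subdeg False by blast
    qed simp
  qed
  have "p \<in> (\<lambda>i. fls_subdegree (z i)) ` T" unfolding p_def using fT by (intro Min_in) auto
  then obtain i1 where i1: "i1 \<in> T" "fls_subdegree (z i1) = p" by auto
  have Z1: "z i1 $$ p \<noteq> 0" using i1 unfolding T_def by auto
  have sZ: "(\<Sum>j<n. z j $$ p) = 0"
    using F unfolding inF_def by (metis fls_nth_sum fls_zero_nth)
  show ?thesis
  proof (rule ccontr)
    assume "\<not> ?thesis"
    then have "\<forall>i<n. magic_app n d a z i $$ (p - int d) = 0" using low by blast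
    then have "\<forall>i<n. (\<Sum>j<n. of_rat (Amat n d a i j) * (z j $$ p)) = 0"
      using mag_app(2)[of p z] low by auto
    then have "\<forall>i<n. z i $$ p = 0"
      using complex_kernel[of n "Amat n d a" "\<lambda>j. z j $$ p"] Amat_neg Amat_diag sZ by blast
    then show False using Z1 i1 unfolding T_def by auto
  qed
qed

lemma magic_inj:
  assumes F: "inF n z" and k: "\<forall>i<n. magic_app n d a z i = 0"
  shows "\<forall>i<n. z i = 0"
  using lead[OF F] k by fastforce

lemma magic_colsum: "j < n \<Longrightarrow> (\<Sum>i<n. magic n d a i j) = 0"
proof -
  assume j: "j < n"
  have "(\<Sum>i<n. magic n d a i j) = magic n d a j j + (\<Sum>i\<in>{..<n}-{j}. magic n d a i j)"
    using j by (simp add: sum.remove)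
  also have "\<dots> = (\<Sum>k\<in>{..<n}-{j}. q j k) - (\<Sum>i\<in>{..<n}-{j}. q i j)"
    unfolding magic_q by (simp add: sum_negf)
  also have "\<dots> = 0" by (simp add: q_sym)
  finally show ?thesis .
qed

lemma magic_sum: "(\<Sum>i<n. magic_app n d a z i) = 0"
proof -
  have "(\<Sum>i<n. magic_app n d a z i) = (\<Sum>j<n. (\<Sum>i<n. magic n d a i j) * z j)"
    unfolding magic_app_def by (subst sum.swap) (simp add: sum_distrib_right)
  also have "\<dots> = 0" using magic_colsum by simp
  finally show ?thesis .
qed

end



lemma dx_one[simp]: "dx d 1 = 0"
proof -
  have "dx d 1 $$ k = 0" for k
  proof (cases "k + int d = 0")
    case True
    then have "(of_int (k + int d) :: complex) = 0" by simp
    then show ?thesis by (simp add: dx_nth)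
  qed (simp add: dx_nth)
  then show ?thesis by (simp add: fls_eq_iff)
qed

lemma pCons0_add: "pCons 0 (x + y) = pCons 0 x + pCons 0 y"
  by simp

lemma pdx_pCons: "pdx d (pCons c p) = pCons (dx d c) (pdx d p)"
  unfolding pdx_def by (simp add: map_poly_pCons)

lemma pdx_0[simp]: "pdx d 0 = 0"
  unfolding pdx_def by simp

lemma pdx_add: "pdx d (p + q) = pdx d p + pdx d q"
  unfolding pdx_def by (intro poly_eqI) (simp add: coeff_map_poly dx_add)

lemma pdx_smult: "pdx d (Polynomial.smult c p) = Polynomial.smult (dx d c) p + Polynomial.smult c (pdx d p)"
  unfolding pdx_def by (intro poly_eqI) (simp add: coeff_map_poly dx_mult)

lemma pdx_mult: "pdx d (p * q) = pdx d p * q + p * pdx d q"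
proof (induct p rule: pCons_induct)
  case (pCons c p)
  have "pdx d (pCons c p * q) = pdx d (Polynomial.smult c q) + pdx d (pCons 0 (p * q))"
    by (simp only: mult_pCons_left pdx_add)
  also have "\<dots> = Polynomial.smult (dx d c) q + Polynomial.smult c (pdx d q) + pCons 0 (pdx d p * q + p * pdx d q)"
    by (simp only: pdx_smult pdx_pCons dx_zero pCons(2))
  also have "\<dots> = pCons (dx d c) (pdx d p) * q + pCons c p * pdx d q"
    by (simp only: mult_pCons_left pCons0_add add_ac)
  also have "\<dots> = pdx d (pCons c p) * q + pCons c p * pdx d q"
    by (simp only: pdx_pCons)
  finally show ?case .
qed simp

lemma pdx_one[simp]: "pdx d 1 = 0"
  unfolding pdx_def by (simp add: map_poly_1)

lemma pdx_prod: "pdx d (prod f as) = (\<Sum>a\<in>as. prod f (as - {a}) * pdx d (f a))"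
proof (induct as rule: infinite_finite_induct)
  case (insert a as)
  then have id: "prod f (insert a as) = f a * prod f as"
    "\<And>g. sum g (insert a as) = g a + sum g as"
    "insert a as - {a} = as"
    by auto
  have "prod f (insert a as - {b}) = f a * prod f (as - {b})" if "b \<in> as" for b
  proof -
    from \<open>a \<notin> as\<close> that have *: "insert a as - {b} = insert a (as - {b})"
      by auto
    show ?thesis
      unfolding * by (subst prod.insert) (use insert in auto)
  qed
  then show ?case
    unfolding id pdx_mult insert(3) sum_distrib_left
    by (auto simp add: ac_simps intro!: sum.cong)
qed auto

lemma pdx_lin: "pdx d [:- c, 1:] = [:- dx d c:]"
  by (simp add: pdx_pCons dx_uminus)

lemma smult_sum_right: "Polynomial.smult c (\<Sum>i\<in>SS. f i) = (\<Sum>i\<in>SS. Polynomial.smult c (f i))"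
  by (induct SS rule: infinite_finite_induct) (auto simp: smult_add_right)

context S begin

definition eps2 :: "nat \<Rightarrow> nat \<Rightarrow> complex fls poly" where
  "eps2 i j = (\<Prod>k\<in>{..<n}-{i,j}. [:- a k, 1:])"

lemma eps2_sym: "eps2 i j = eps2 j i"
  unfolding eps2_def by (simp add: insert_commute)

lemma fpoly_split: "i < n \<Longrightarrow> fpoly n a = [:- a i, 1:] * eps n a i"
  unfolding fpoly_def eps_def by (simp add: prod.remove)

lemma eps_split: "i < n \<Longrightarrow> j < n \<Longrightarrow> i \<noteq> j \<Longrightarrow> eps n a i = [:- a j, 1:] * eps2 i j"
proof -
  assume h: "i < n" "j < n" "i \<noteq> j"
  have "{..<n}-{i} = insert j ({..<n}-{i,j})" using h by auto
  then show ?thesis unfolding eps_def eps2_def by simp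
qed

lemma eps_eps: "i < n \<Longrightarrow> j < n \<Longrightarrow> i \<noteq> j \<Longrightarrow> eps n a i * eps n a j = fpoly n a * eps2 i j"
proof -
  assume h: "i < n" "j < n" "i \<noteq> j"
  have "eps n a i * eps n a j = ([:- a j, 1:] * eps2 i j) * eps n a j" using eps_split[OF h] by simp
  also have "\<dots> = ([:- a j, 1:] * eps n a j) * eps2 i j" by (simp only: ac_simps)
  also have "\<dots> = fpoly n a * eps2 i j" using fpoly_split[OF h(2)] by simp
  finally show ?thesis .
qed

lemma eps_diff: "i < n \<Longrightarrow> j < n \<Longrightarrow> i \<noteq> j \<Longrightarrow> eps n a i - eps n a j = Polynomial.smult (a i - a j) (eps2 i j)"
proof -
  assume h: "i < n" "j < n" "i \<noteq> j"
  have e1: "eps n a i = [:- a j, 1:] * eps2 i j" using eps_split[OF h] .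
  have e2: "eps n a j = [:- a i, 1:] * eps2 i j" using eps_split[of j i] h eps2_sym[of i j] by simp
  have "eps n a i - eps n a j = ([:- a j, 1:] - [:- a i, 1:]) * eps2 i j"
    unfolding e1 e2 by (simp only: left_diff_distrib)
  also have "[:- a j, 1:] - [:- a i, 1:] = [:a i - a j:]" by simp
  finally show ?thesis by simp
qed

lemma fy: "pderiv (fpoly n a) = (\<Sum>i<n. eps n a i)"
  unfolding fpoly_def eps_def pderiv_prod by (simp add: pderiv_pCons)

lemma fx: "pdx d (fpoly n a) = (\<Sum>i<n. Polynomial.smult (- dx d (a i)) (eps n a i))"
  unfolding fpoly_def eps_def pdx_prod pdx_lin by (simp add: ac_simps)

definition c :: "nat \<Rightarrow> complex fls" where "c k = poly (eps n a k) (a k)"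

lemma c_nz: "k < n \<Longrightarrow> c k \<noteq> 0"
  unfolding c_def eps_def using dist by (auto simp: poly_prod)

lemma poly_eps: "i < n \<Longrightarrow> k < n \<Longrightarrow> poly (eps n a i) (a k) = (if i = k then c k else 0)"
proof -
  assume h: "i < n" "k < n"
  show ?thesis
  proof (cases "i = k")
    case False
    then show ?thesis using eps_split[of i k] h by simp
  qed (simp add: c_def)
qed

lemma poly_fpoly: "k < n \<Longrightarrow> poly (fpoly n a) (a k) = 0"
  using fpoly_split[of k] by simp

lemma poly_vec: "k < n \<Longrightarrow> poly (vec_poly n a u) (a k) = u k * c k"
proof -
  assume k: "k < n"
  have "poly (vec_poly n a u) (a k) = (\<Sum>i<n. u i * (if i = k then c k else 0))"
    unfolding vec_poly_def poly_sum using poly_eps[OF _ k] by simp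
  also have "\<dots> = (\<Sum>i<n. if i = k then u k * c k else 0)" by (intro sum.cong) auto
  also have "\<dots> = u k * c k" using k by simp
  finally show ?thesis .
qed

end



lemma swap_offdiag:
  fixes F :: "nat \<Rightarrow> nat \<Rightarrow> 'b::comm_monoid_add"
  shows "(\<Sum>i<n. \<Sum>j\<in>{..<n}-{i}. F i j) = (\<Sum>j<n. \<Sum>i\<in>{..<n}-{j}. F i j)"
proof -
  have "(\<Sum>i<n. \<Sum>j\<in>{..<n}-{i}. F i j) = (\<Sum>i\<in>{..<n}. \<Sum>j\<in>{j. j\<in>{..<n} \<and> i \<noteq> j}. F i j)"
    by (intro sum.cong) auto
  also have "\<dots> = (\<Sum>j\<in>{..<n}. \<Sum>i\<in>{i. i\<in>{..<n} \<and> i \<noteq> j}. F i j)"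
    by (rule sum.swap_restrict) auto
  also have "\<dots> = (\<Sum>j<n. \<Sum>i\<in>{..<n}-{j}. F i j)"
    by (intro sum.cong) auto
  finally show ?thesis .
qed

context S begin

lemma fx_vec: "pdx d (fpoly n a) = vec_poly n a (\<lambda>i. - dx d (a i))"
  unfolding fx vec_poly_def ..

lemma fy_vec: "pderiv (fpoly n a) = vec_poly n a (\<lambda>i. 1)"
  unfolding fy vec_poly_def by simp

lemma vec_poly_cong: "(\<And>i. i < n \<Longrightarrow> u i = u' i) \<Longrightarrow> vec_poly n a u = vec_poly n a u'"
  unfolding vec_poly_def by (intro sum.cong) auto

lemma vec_mult: "vec_poly n a x * vec_poly n a y =
   (\<Sum>i<n. \<Sum>j<n. Polynomial.smult (x i * y j) (eps n a i * eps n a j))"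
  unfolding vec_poly_def sum_product by (simp add: mult_smult_left mult_smult_right smult_smult mult_ac)

lemma key:
  "vec_poly n a u * pdx d (fpoly n a) + vec_poly n a (\<lambda>i. u i * dx d (a i)) * pderiv (fpoly n a)
    = fpoly n a * vec_poly n a (magic_app n d a u)"
proof -
  let ?E = "eps n a" and ?f = "fpoly n a" and ?da = "\<lambda>i. dx d (a i)"
  have "vec_poly n a u * pdx d ?f + vec_poly n a (\<lambda>i. u i * ?da i) * pderiv ?f
     = (\<Sum>i<n. \<Sum>j<n. Polynomial.smult (u i * (?da i - ?da j)) (?E i * ?E j))"
    unfolding fx_vec fy_vec vec_mult
    by (simp add: sum.distrib[symmetric] smult_add_left[symmetric] smult_diff_left algebra_simps)
  also have "\<dots> = (\<Sum>i<n. ?f * (\<Sum>j\<in>{..<n}-{i}. Polynomial.smult (u i * q i j) (?E i - ?E j)))"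
  proof (intro sum.cong refl)
    fix i assume i: "i \<in> {..<n}"
    have "(\<Sum>j<n. Polynomial.smult (u i * (?da i - ?da j)) (?E i * ?E j))
        = (\<Sum>j\<in>{..<n}-{i}. Polynomial.smult (u i * (?da i - ?da j)) (?E i * ?E j))"
      using i by (simp add: sum.remove)
    also have "\<dots> = (\<Sum>j\<in>{..<n}-{i}. ?f * Polynomial.smult (u i * q i j) (?E i - ?E j))"
    proof (intro sum.cong refl)
      fix j assume j: "j \<in> {..<n}-{i}"
      then have h: "i < n" "j < n" "i \<noteq> j" using i by auto
      have "?da i - ?da j = q i j * (a i - a j)"
        unfolding q_def using diff_props(1)[OF h] by simp
      then show "Polynomial.smult (u i * (?da i - ?da j)) (?E i * ?E j) = ?f * Polynomial.smult (u i * q i j) (?E i - ?E j)"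
        using eps_eps[OF h] eps_diff[OF h] by (simp add: mult_smult_right smult_smult mult_ac)
    qed
    also have "\<dots> = ?f * (\<Sum>j\<in>{..<n}-{i}. Polynomial.smult (u i * q i j) (?E i - ?E j))"
      by (simp add: sum_distrib_left)
    finally show "(\<Sum>j<n. Polynomial.smult (u i * (?da i - ?da j)) (?E i * ?E j))
        = ?f * (\<Sum>j\<in>{..<n}-{i}. Polynomial.smult (u i * q i j) (?E i - ?E j))" .
  qed
  also have "\<dots> = ?f * ((\<Sum>i<n. \<Sum>j\<in>{..<n}-{i}. Polynomial.smult (u i * q i j) (?E i))
                      - (\<Sum>i<n. \<Sum>j\<in>{..<n}-{i}. Polynomial.smult (u i * q i j) (?E j)))"
    by (simp add: sum_distrib_left[symmetric] smult_diff_right sum_subtractf)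
  also have "(\<Sum>i<n. \<Sum>j\<in>{..<n}-{i}. Polynomial.smult (u i * q i j) (?E j))
      = (\<Sum>j<n. Polynomial.smult (\<Sum>i\<in>{..<n}-{j}. u i * q i j) (?E j))"
    by (subst swap_offdiag) (simp add: smult_sum)
  also have "(\<Sum>i<n. \<Sum>j\<in>{..<n}-{i}. Polynomial.smult (u i * q i j) (?E i))
      = (\<Sum>i<n. Polynomial.smult (\<Sum>j\<in>{..<n}-{i}. u i * q i j) (?E i))"
    by (simp add: smult_sum)
  also have "(\<Sum>i<n. Polynomial.smult (\<Sum>j\<in>{..<n}-{i}. u i * q i j) (?E i))
           - (\<Sum>j<n. Polynomial.smult (\<Sum>i\<in>{..<n}-{j}. u i * q i j) (?E j))
           = vec_poly n a (magic_app n d a u)"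
  proof -
    have m: "magic_app n d a u i = (\<Sum>j\<in>{..<n}-{i}. u i * q i j) - (\<Sum>j\<in>{..<n}-{i}. u j * q j i)"
      if i: "i < n" for i
    proof -
      have "magic_app n d a u i = magic n d a i i * u i + (\<Sum>j\<in>{..<n}-{i}. magic n d a i j * u j)"
        unfolding magic_app_def using i by (simp add: sum.remove)
      also have "\<dots> = (\<Sum>j\<in>{..<n}-{i}. u i * q i j) - (\<Sum>j\<in>{..<n}-{i}. u j * q j i)"
        unfolding magic_q by (simp add: sum_distrib_left sum_distrib_right sum_negf q_sym mult_ac)
      finally show ?thesis .
    qed
    have "vec_poly n a (magic_app n d a u) = (\<Sum>i<n. Polynomial.smult ((\<Sum>j\<in>{..<n}-{i}. u i * q i j) - (\<Sum>j\<in>{..<n}-{i}. u j * q j i)) (?E i))"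
      unfolding vec_poly_def using m by (intro sum.cong) auto
    also have "\<dots> = (\<Sum>i<n. Polynomial.smult (\<Sum>j\<in>{..<n}-{i}. u i * q i j) (?E i))
           - (\<Sum>j<n. Polynomial.smult (\<Sum>i\<in>{..<n}-{j}. u i * q i j) (?E j))"
      by (simp add: smult_diff_left sum_subtractf)
    finally show ?thesis by simp
  qed
  finally show ?thesis .
qed

lemma fpoly_nz: "fpoly n a \<noteq> 0"
  unfolding fpoly_def by (simp add: prod_zero_iff)

lemma evalv:
  assumes eq: "vec_poly n a u' * pdx d (fpoly n a) + vec_poly n a v' * pderiv (fpoly n a) = vec_poly n a w * fpoly n a"
    and k: "k < n"
  shows "v' k = u' k * dx d (a k)"
proof -
  have "poly (vec_poly n a u' * pdx d (fpoly n a) + vec_poly n a v' * pderiv (fpoly n a)) (a k) = 0"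
    using eq poly_fpoly[OF k] by simp
  then have "c k * c k * (v' k - u' k * dx d (a k)) = 0"
    unfolding fx_vec fy_vec using poly_vec[OF k] by (simp add: algebra_simps)
  then show ?thesis using c_nz[OF k] by simp
qed

lemma evalw:
  assumes "fpoly n a * vec_poly n a z = fpoly n a * vec_poly n a w" and k: "k < n"
  shows "z k = w k"
proof -
  have "vec_poly n a z = vec_poly n a w" using assms(1) fpoly_nz by simp
  then have "z k * c k = w k * c k" using poly_vec[OF k] by metis
  then show ?thesis using c_nz[OF k] by simp
qed

end



lemma coeff_x_nonint: "r * of_nat d \<notin> \<int> \<Longrightarrow> coeff_x d g r = 0"
  unfolding coeff_x_def by (rule if_not_P)

theorem mainTheorem3:
  fixes n d :: nat and a w :: "nat \<Rightarrow> complex fls" and r :: rat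
  assumes "n \<ge> 2" and "d \<ge> 1"
    and "\<forall>i<n. \<forall>j<n. i \<noteq> j \<longrightarrow> a i \<noteq> a j"
    and "\<forall>i<n. nu_gt d (a i) 0"
    and "inF n w" and "E_ge n d w r"
  shows "\<exists>u v.
     inF n u
     \<and> vec_poly n a u * pdx d (fpoly n a) + vec_poly n a v * pderiv (fpoly n a)
         = vec_poly n a w * fpoly n a
     \<and> (\<forall>u' v'. inF n u' \<and>
          vec_poly n a u' * pdx d (fpoly n a) + vec_poly n a v' * pderiv (fpoly n a)
            = vec_poly n a w * fpoly n a
          \<longrightarrow> (\<forall>i<n. u' i = u i \<and> v' i = v i))
     \<and> (\<forall>i<n. magic_app n d a u i = w i)
     \<and> (\<forall>i<n. v i = u i * dx d (a i))
     \<and> E_ge n d u (r + 1)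
     \<and> E_gt n d v r
     \<and> inF n (in_r d u (r + 1))
     \<and> (\<forall>i<n. Amat_app n d a (in_r d u (r + 1)) i = in_r d w r i)"
proof -
  interpret S n d a using assms(2-4) by unfold_locales auto
  have n0: "n > 0" using assms(1) by simp
  define M where "M = (\<lambda>i j. magic n d a i j + 1)"
  have eM: "(\<Sum>j<n. M i j * x j) = magic_app n d a x i + (\<Sum>j<n. x j)" for i x
    unfolding magic_app_def M_def by (simp add: distrib_right sum.distrib)
  have sumM: "(\<Sum>i<n. \<Sum>j<n. M i j * x j) = of_nat n * (\<Sum>j<n. x j)" for x
    unfolding eM by (simp add: sum.distrib magic_sum)
  have inj: "\<forall>i<n. x i = 0" if h: "\<forall>i<n. (\<Sum>j<n. M i j * x j) = 0" for x
  proof -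
    have "of_nat n * (\<Sum>j<n. x j) = 0" using h sumM[of x] by simp
    then have s: "(\<Sum>j<n. x j) = 0" using n0 by simp
    then have "\<forall>i<n. magic_app n d a x i = 0" using h eM by simp
    then show "\<forall>i<n. x i = 0" using magic_inj s unfolding inF_def by blast
  qed
  obtain u where u: "\<forall>i<n. (\<Sum>j<n. M i j * u j) = w i"
    using solve_lin[of n M w] inj by blast
  have "of_nat n * (\<Sum>j<n. u j) = (\<Sum>i<n. w i)" using sumM[of u] u by simp
  then have uF0: "(\<Sum>j<n. u j) = 0" using assms(5) n0 unfolding inF_def by simp
  then have uF: "inF n u" unfolding inF_def .
  have mu: "\<forall>i<n. magic_app n d a u i = w i" using u eM uF0 by simp
  define v where "v = (\<lambda>i. u i * dx d (a i))"
  have eqn: "vec_poly n a u * pdx d (fpoly n a) + vec_poly n a v * pderiv (fpoly n a) = vec_poly n a w * fpoly n a"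
    using key[of u] vec_poly_cong[of "magic_app n d a u" w] mu unfolding v_def by (simp add: mult.commute)
  have uniq: "\<forall>i<n. u' i = u i \<and> v' i = v i"
    if h: "inF n u'" "vec_poly n a u' * pdx d (fpoly n a) + vec_poly n a v' * pderiv (fpoly n a)
            = vec_poly n a w * fpoly n a" for u' v'
  proof -
    have v': "\<forall>k<n. v' k = u' k * dx d (a k)" using evalv[OF h(2)] by blast
    have "vec_poly n a v' = vec_poly n a (\<lambda>i. u' i * dx d (a i))" using v' by (intro vec_poly_cong) auto
    then have "vec_poly n a u' * pdx d (fpoly n a) + vec_poly n a (\<lambda>i. u' i * dx d (a i)) * pderiv (fpoly n a)
            = vec_poly n a w * fpoly n a" using h(2) by simp
    then have "fpoly n a * vec_poly n a (magic_app n d a u') = fpoly n a * vec_poly n a w"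
      using key[of u'] by (metis mult.commute)
    then have mu': "\<forall>k<n. magic_app n d a u' k = w k" using evalw by blast
    define z where "z = (\<lambda>i. u' i - u i)"
    have zF: "inF n z" using h(1) uF unfolding inF_def z_def by (simp add: sum_subtractf)
    have "\<forall>i<n. magic_app n d a z i = 0"
      using mu mu' unfolding magic_app_def z_def by (simp add: right_diff_distrib sum_subtractf)
    then have "\<forall>i<n. z i = 0" using magic_inj zF by blast
    then show ?thesis using v' unfolding z_def v_def by simp
  qed
  have wl: "\<forall>i<n. lowvan \<lceil>r * of_nat d\<rceil> (w i)"
    using assms(6) nu_ge_iff[OF assms(2)] unfolding E_ge_def by blast
  have ceil: "\<lceil>(r+1) * of_nat d\<rceil> = \<lceil>r * of_nat d\<rceil> + int d"
  proof -
    have "(r+1) * of_nat d = r * of_nat d + of_int (int d)" by (simp add: distrib_right)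
    then show ?thesis by (simp only: ceiling_add_of_int)
  qed
  have ul: "\<forall>j<n. lowvan \<lceil>(r+1) * of_nat d\<rceil> (u j)"
  proof (rule ccontr)
    assume nl: "\<not> ?thesis"
    then have "\<exists>i<n. u i \<noteq> 0" by auto
    then obtain p where p: "\<forall>j<n. lowvan p (u j)" "\<exists>i<n. magic_app n d a u i $$ (p - int d) \<noteq> 0"
      using lead[OF uF] by blast
    then obtain i where i: "i < n" "w i $$ (p - int d) \<noteq> 0" using mu by auto
    then have "\<not> p - int d < \<lceil>r * of_nat d\<rceil>" using wl unfolding lowvan_def by blast
    then have "\<lceil>(r+1) * of_nat d\<rceil> \<le> p" using ceil by simp
    then show False using nl p(1) lowvan_mono by blast
  qed
  have Eu: "E_ge n d u (r + 1)" using ul nu_ge_iff[OF assms(2)] unfolding E_ge_def by blast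
  have Ev: "E_gt n d v r" unfolding E_gt_def
  proof (intro allI impI)
    fix i assume i: "i < n"
    have dxl: "lowvan (1 - int d) (dx d (a i))"
      using a_low[OF i] unfolding lowvan_def dx_nth by simp
    have "lowvan (\<lceil>(r+1) * of_nat d\<rceil> + (1 - int d)) (v i)"
      unfolding v_def using lowvan_mult(1)[OF ul[rule_format, OF i] dxl] .
    moreover have "\<lfloor>r * of_nat d\<rfloor> + 1 \<le> \<lceil>(r+1) * of_nat d\<rceil> + (1 - int d)"
      using ceil floor_le_ceiling[of "r * of_nat d"] by simp
    ultimately show "nu_gt d (v i) r" using nu_gt_iff[OF assms(2)] lowvan_mono by blast
  qed
  have ints: "(r + 1) * of_nat d \<in> \<int> \<longleftrightarrow> r * of_nat d \<in> \<int>"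
  proof -
    have e: "(r + 1) * of_nat d = r * of_nat d + of_nat d" by (simp add: distrib_right)
    show ?thesis unfolding e
      by (metis Ints_add Ints_diff Ints_of_nat add_diff_cancel_right')
  qed
  have inFin: "inF n (in_r d u (r + 1))"
    unfolding inF_def in_r_def coeff_x_def using uF0
    by (cases "(r + 1) * rat_of_nat d \<in> \<int>") (simp_all add: fls_nth_sum[symmetric])
  have Aeq: "\<forall>i<n. Amat_app n d a (in_r d u (r + 1)) i = in_r d w r i"
  proof (cases "r * of_nat d \<in> \<int>")
    case True
    then obtain m where m: "r * of_nat d = of_int m" by (auto elim: Ints_cases)
    have m1: "(r + 1) * of_nat d = of_int (m + int d)" using m by (simp add: distrib_right)
    have ulm: "\<forall>j<n. lowvan (m + int d) (u j)" using ul unfolding m1 ceiling_of_int .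
    have c1: "in_r d u (r + 1) j = u j $$ (m + int d)" for j
      unfolding in_r_def coeff_x_def m1 by (simp only: Ints_of_int floor_of_int if_True)
    have c2: "in_r d w r i = w i $$ m" for i
      unfolding in_r_def coeff_x_def m by (simp only: Ints_of_int floor_of_int if_True)
    show ?thesis
    proof (intro allI impI)
      fix i assume i: "i < n"
      have "w i $$ m = (\<Sum>j<n. of_rat (Amat n d a i j) * (u j $$ (m + int d)))"
        using mag_app(2)[of "m + int d" u i] ulm i mu by simp
      then show "Amat_app n d a (in_r d u (r + 1)) i = in_r d w r i"
        unfolding Amat_app_def c1 c2 by simp
    qed
  next
    case False
    have nz: "(r + 1) * of_nat d \<notin> \<int>" by (rule contrapos_nn[OF False ints[THEN iffD1]])
    have z1: "in_r d u (r + 1) j = 0" for j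
      unfolding in_r_def by (rule coeff_x_nonint[OF nz])
    have z2: "in_r d w r i = 0" for i
      unfolding in_r_def by (rule coeff_x_nonint[OF False])
    show ?thesis unfolding Amat_app_def z1 z2 by simp
  qed
  have vv: "\<forall>i<n. v i = u i * dx d (a i)" unfolding v_def by simp
  have U: "\<forall>u' v'. inF n u' \<and>
          vec_poly n a u' * pdx d (fpoly n a) + vec_poly n a v' * pderiv (fpoly n a)
            = vec_poly n a w * fpoly n a
          \<longrightarrow> (\<forall>i<n. u' i = u i \<and> v' i = v i)"
    using uniq by blast
  show ?thesis
    apply (rule exI[where x = u], rule exI[where x = v])
    apply (intro conjI)
    by (fact uF eqn U mu vv Eu Ev inFin Aeq)+
qed



end
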